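(* Let $\bar g$ be a two-dimensional Lorentzian metric and $\psi$ a smooth function such that $d\psi$ is a non-null conformal Killing one-form of $\bar g$, and let $(x,t)$ be local coordinates in which $\psi=\psi(x)$ and $\bar g=\psi'(x)\,(dx^2-dt^2)$. Let $F_1,F_2$ be functions of $x$ only such that $F_1\,dF_2$ is also a non-null conformal Killing one-form of $\bar g$. Then there is a constant $\tilde k$ such that \[ F_1\,dF_2=\tilde k\, d\psi. \]
   Context: A one-form $\omega$ on a pseudo-Riemannian manifold $(M,\bar g)$ is called a conformal Killing one-form if its metric dual vector field $X=\bar g^{-1}(\omega)$ is a conformal Killing vector field, i.e. $\mathcal{L}_X\bar g=\lambda\,\bar g$ for some function $\lambda$. Non-null means $\bar g^{-1}(\omega,\omega)\neq0$. *)

theory Defs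
  imports "HOL-Analysis.Analysis"
begin

text \<open>Coordinates on the surface: a point p :: real^2 has x = p$1 and t = p$2.
  One-forms and vector fields are given by their component vectors in these coordinates,
  a (0,2)-tensor field (metric) by its component matrix.\<close>

definition pd :: "(real^2 \<Rightarrow> real) \<Rightarrow> 2 \<Rightarrow> real^2 \<Rightarrow> real" where
  "pd f i p = frechet_derivative f (at p) (axis i 1)"

definition dform :: "(real^2 \<Rightarrow> real) \<Rightarrow> real^2 \<Rightarrow> real^2" where
  "dform f p = (\<chi> i. pd f i p)"

definition raise :: "(real^2 \<Rightarrow> real^2^2) \<Rightarrow> (real^2 \<Rightarrow> real^2) \<Rightarrow> real^2 \<Rightarrow> real^2" where
  "raise g \<omega> p = matrix_inv (g p) *v \<omega> p"

definition lie_metric :: "(real^2 \<Rightarrow> real^2) \<Rightarrow> (real^2 \<Rightarrow> real^2^2) \<Rightarrow> real^2 \<Rightarrow> real^2^2" where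
  "lie_metric X g p = (\<chi> i j. \<Sum>k\<in>UNIV.
      X p $ k * pd (\<lambda>q. g q $ i $ j) k p
    + g p $ k $ j * pd (\<lambda>q. X q $ k) i p
    + g p $ i $ k * pd (\<lambda>q. X q $ k) j p)"

definition conformal_killing_vf :: "(real^2) set \<Rightarrow> (real^2 \<Rightarrow> real^2^2) \<Rightarrow> (real^2 \<Rightarrow> real^2) \<Rightarrow> bool" where
  "conformal_killing_vf U g X \<longleftrightarrow>
     (\<forall>p\<in>U. X differentiable (at p)) \<and>
     (\<exists>c::real^2 \<Rightarrow> real. \<forall>p\<in>U. lie_metric X g p = c p *\<^sub>R g p)"

definition conformal_killing_form :: "(real^2) set \<Rightarrow> (real^2 \<Rightarrow> real^2^2) \<Rightarrow> (real^2 \<Rightarrow> real^2) \<Rightarrow> bool" where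
  "conformal_killing_form U g \<omega> \<longleftrightarrow> conformal_killing_vf U g (raise g \<omega>)"

definition non_null :: "(real^2) set \<Rightarrow> (real^2 \<Rightarrow> real^2^2) \<Rightarrow> (real^2 \<Rightarrow> real^2) \<Rightarrow> bool" where
  "non_null U g \<omega> \<longleftrightarrow> (\<forall>p\<in>U. \<omega> p \<bullet> raise g \<omega> p \<noteq> 0)"

definition smooth_real_on :: "real set \<Rightarrow> (real \<Rightarrow> real) \<Rightarrow> bool" where
  "smooth_real_on S f \<longleftrightarrow> (\<forall>n. \<forall>x\<in>S. ((deriv ^^ n) f) differentiable (at x))"

definition coord_metric :: "(real \<Rightarrow> real) \<Rightarrow> real^2 \<Rightarrow> real^2^2" where
  "coord_metric \<psi> p = (\<chi> i j. if i = j then (if i = 1 then deriv \<psi> (p$1) else - deriv \<psi> (p$1)) else 0)"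

end

theory Submission
  imports Defs
begin

definition dmat :: "real \<Rightarrow> real^2^2" where
 "dmat a = (\<chi> i j. if i = j then (if i = 1 then a else - a) else 0)"

lemma cm_dmat: "coord_metric \<psi> p = dmat (deriv \<psi> (p$1))"
  by (simp add: coord_metric_def dmat_def)

lemma dmat_mul: "a \<noteq> 0 \<Longrightarrow> dmat a ** dmat (1/a) = mat 1 \<and> dmat (1/a) ** dmat a = mat 1"
  by (simp add: dmat_def matrix_matrix_mult_def mat_def vec_eq_iff forall_2 sum_2)

lemma inv_dmat: assumes "a \<noteq> 0" shows "matrix_inv (dmat a) = dmat (1/a)"
proof -
  have "\<And>B. dmat a ** B = mat 1 \<and> B ** dmat a = mat 1 \<Longrightarrow> B = dmat (1/a)"
  proof -
    fix B assume h: "dmat a ** B = mat 1 \<and> B ** dmat a = mat 1"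
    have "B = (dmat (1/a) ** dmat a) ** B" using dmat_mul[OF assms] by simp
    also have "\<dots> = dmat (1/a) ** (dmat a ** B)" by (simp add: matrix_mul_assoc)
    also have "\<dots> = dmat (1/a)" using h by simp
    finally show "B = dmat (1/a)" .
  qed
  then show ?thesis unfolding matrix_inv_def using dmat_mul[OF assms]
    by (metis (mono_tags, lifting) someI_ex)
qed

lemma raise_val: assumes "deriv \<psi> (p$1) \<noteq> 0"
  shows "raise (coord_metric \<psi>) \<omega> p = (\<chi> i. if i = 1 then \<omega> p $ 1 / deriv \<psi> (p$1) else - \<omega> p $ 2 / deriv \<psi> (p$1))"
proof -
  have "raise (coord_metric \<psi>) \<omega> p = dmat (1 / deriv \<psi> (p$1)) *v \<omega> p"
    unfolding raise_def cm_dmat using assms by (simp add: inv_dmat)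
  then show ?thesis
    by (simp add: matrix_vector_mult_def dmat_def vec_eq_iff forall_2 sum_2)
qed

lemma pd_comp:
  assumes "(f has_real_derivative D) (at (p$1))"
  shows "pd (\<lambda>q. f (q$1)) i p = (if i = 1 then D else 0)"
proof -
  have "((\<lambda>q. f (q$1)) has_derivative (\<lambda>v. D * v$1)) (at p)"
    using has_derivative_compose[OF bounded_linear_imp_has_derivative[OF bounded_linear_vec_nth[of 1]] assms[unfolded has_field_derivative_def]]
    by (simp add: o_def mult.commute)
  from frechet_derivative_at[OF this] have "pd (\<lambda>q. f (q$1)) i p = D * (axis i 1 :: real^2) $ 1"
    unfolding pd_def by metis
  then show ?thesis by (simp add: axis_def)
qed

lemma dform_comp:
  assumes "(f has_real_derivative D) (at (p$1))"
  shows "dform (\<lambda>q. f (q$1)) p = (\<chi> i. if i = 1 then D else 0)"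
  unfolding dform_def using pd_comp[OF assms] by simp

theorem proposition2:
  fixes \<psi> F1 F2 :: "real \<Rightarrow> real" and U :: "(real^2) set"
  assumes "open U" and "connected U"
    and "smooth_real_on ((\<lambda>p. p$1) ` U) \<psi>"
    and "smooth_real_on ((\<lambda>p. p$1) ` U) F1"
    and "smooth_real_on ((\<lambda>p. p$1) ` U) F2"
    and "\<forall>p\<in>U. deriv \<psi> (p$1) \<noteq> 0"
    and "conformal_killing_form U (coord_metric \<psi>) (dform (\<lambda>q. \<psi> (q$1)))"
    and "non_null U (coord_metric \<psi>) (dform (\<lambda>q. \<psi> (q$1)))"
    and "conformal_killing_form U (coord_metric \<psi>) (\<lambda>p. F1 (p$1) *\<^sub>R dform (\<lambda>q. F2 (q$1)) p)"
    and "non_null U (coord_metric \<psi>) (\<lambda>p. F1 (p$1) *\<^sub>R dform (\<lambda>q. F2 (q$1)) p)"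
  shows "\<exists>k::real. \<forall>p\<in>U. F1 (p$1) *\<^sub>R dform (\<lambda>q. F2 (q$1)) p = k *\<^sub>R dform (\<lambda>q. \<psi> (q$1)) p"
proof -
  define S where "S = (\<lambda>p. p$1) ` U"
  define a where "a = deriv \<psi>"
  define w where "w x = F1 x * deriv F2 x" for x
  define h where "h x = w x / a x" for x
  define \<omega> where "\<omega> = (\<lambda>p. F1 (p$1) *\<^sub>R dform (\<lambda>q. F2 (q$1)) p)"
  define X where "X = raise (coord_metric \<psi>) \<omega>"
  define g where "g = coord_metric \<psi>"
  have sm: "\<And>f (n::nat) (x::real). smooth_real_on S f \<Longrightarrow> x \<in> S \<Longrightarrow> ((deriv ^^ n) f) differentiable (at x)"
    unfolding smooth_real_on_def by blast
  have dF1: "x \<in> S \<Longrightarrow> F1 differentiable (at x)" for x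
    using sm[where f=F1 and n=0 and x=x] assms(4) S_def by simp
  have dF2: "x \<in> S \<Longrightarrow> F2 differentiable (at x)" for x
    using sm[where f=F2 and n=0 and x=x] assms(5) S_def by simp
  have ddF2: "x \<in> S \<Longrightarrow> deriv F2 differentiable (at x)" for x
    using sm[where f=F2 and n=1 and x=x] assms(5) S_def by simp
  have dpsi: "x \<in> S \<Longrightarrow> \<psi> differentiable (at x)" for x
    using sm[where f=\<psi> and n=0 and x=x] assms(3) S_def by simp
  have da: "x \<in> S \<Longrightarrow> a differentiable (at x)" for x
    using sm[where f=\<psi> and n=1 and x=x] assms(3) S_def a_def by simp
  have anz: "p \<in> U \<Longrightarrow> a (p$1) \<noteq> 0" for p using assms(6) a_def by simp
  have dh: "p \<in> U \<Longrightarrow> h differentiable (at (p$1))" for p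
  proof -
    assume p: "p \<in> U"
    then have x: "p$1 \<in> S" using S_def by blast
    have "w differentiable (at (p$1))"
      unfolding w_def[abs_def] using dF1[OF x] ddF2[OF x] by (intro differentiable_mult) auto
    then show ?thesis unfolding h_def[abs_def]
      using da[OF x] anz[OF p] by (intro differentiable_divide) auto
  qed
  have Dh: "p \<in> U \<Longrightarrow> (h has_real_derivative deriv h (p$1)) (at (p$1))" for p
    using dh DERIV_deriv_iff_real_differentiable by blast
  have omega: "p \<in> U \<Longrightarrow> \<omega> p = (\<chi> i. if i = 1 then w (p$1) else 0)" for p
  proof -
    assume p: "p \<in> U"
    then have x: "p$1 \<in> S" using S_def by blast
    have "(F2 has_real_derivative deriv F2 (p$1)) (at (p$1))"
      using dF2[OF x] DERIV_deriv_iff_real_differentiable by blast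
    from dform_comp[OF this] show ?thesis
      unfolding \<omega>_def w_def by (simp add: vec_eq_iff)
  qed
  have dformpsi: "p \<in> U \<Longrightarrow> dform (\<lambda>q. \<psi> (q$1)) p = (\<chi> i. if i = 1 then a (p$1) else 0)" for p
  proof -
    assume p: "p \<in> U"
    then have x: "p$1 \<in> S" using S_def by blast
    have "(\<psi> has_real_derivative deriv \<psi> (p$1)) (at (p$1))"
      using dpsi[OF x] DERIV_deriv_iff_real_differentiable by blast
    from dform_comp[OF this] show ?thesis unfolding a_def by simp
  qed
  have X1: "q \<in> U \<Longrightarrow> X q $ 1 = h (q$1)" for q
    unfolding X_def using raise_val[of \<psi> q \<omega>] anz[of q] omega[of q]
    by (simp add: h_def a_def)
  have X2: "q \<in> U \<Longrightarrow> X q $ 2 = 0" for q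
    unfolding X_def using raise_val[of \<psi> q \<omega>] anz[of q] omega[of q]
    by (simp add: a_def)
  have hder: "p \<in> U \<Longrightarrow> ((\<lambda>q. h (q$1)) has_derivative (\<lambda>v. deriv h (p$1) * v$1)) (at p)" for p
    using has_derivative_compose[OF bounded_linear_imp_has_derivative[OF bounded_linear_vec_nth[of 1]] Dh[of p, unfolded has_field_derivative_def]]
    by (simp add: o_def mult.commute)
  have pdX1: "p \<in> U \<Longrightarrow> pd (\<lambda>q. X q $ 1) i p = (if i = 1 then deriv h (p$1) else 0)" for p i
  proof -
    assume p: "p \<in> U"
    have "((\<lambda>q. X q $ 1) has_derivative (\<lambda>v. deriv h (p$1) * v$1)) (at p)"
      using has_derivative_transform_within_open[OF hder[OF p] assms(1) p] X1 by simp
    from frechet_derivative_at[OF this] have "pd (\<lambda>q. X q $ 1) i p = deriv h (p$1) * (axis i 1 :: real^2) $ 1"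
      unfolding pd_def by metis
    then show ?thesis by (simp add: axis_def)
  qed
  have pdX2: "p \<in> U \<Longrightarrow> pd (\<lambda>q. X q $ 2) i p = 0" for p i
  proof -
    assume p: "p \<in> U"
    have "((\<lambda>q. X q $ 2) has_derivative (\<lambda>v. 0)) (at p)"
      using has_derivative_transform_within_open[OF has_derivative_const[of 0] assms(1) p, of "\<lambda>q. X q $ 2"] X2 by (metis (no_types))
    from frechet_derivative_at[OF this] show ?thesis unfolding pd_def by metis
  qed
  have Da: "p \<in> U \<Longrightarrow> (a has_real_derivative deriv a (p$1)) (at (p$1))" for p
    using da S_def DERIV_deriv_iff_real_differentiable by blast
  have pdg11: "p \<in> U \<Longrightarrow> pd (\<lambda>q. g q $ 1 $ 1) 1 p = deriv a (p$1)" for p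
    using pd_comp[OF Da[of p], of 1] by (simp add: g_def coord_metric_def a_def)
  have pdg22: "p \<in> U \<Longrightarrow> pd (\<lambda>q. g q $ 2 $ 2) 1 p = - deriv a (p$1)" for p
    using pd_comp[OF DERIV_minus[OF Da[of p]], of 1] by (simp add: g_def coord_metric_def a_def)
  obtain c where c: "\<forall>p\<in>U. lie_metric X g p = c p *\<^sub>R g p"
    using assms(9) unfolding conformal_killing_form_def conformal_killing_vf_def X_def g_def \<omega>_def by blast
  have h0: "p \<in> U \<Longrightarrow> deriv h (p$1) = 0" for p
  proof -
    assume p: "p \<in> U"
    have e: "lie_metric X g p $ 1 $ 1 = c p * g p $ 1 $ 1" "lie_metric X g p $ 2 $ 2 = c p * g p $ 2 $ 2"
      using c p by auto
    have g11: "g p $ 1 $ 1 = a (p$1)" and g22: "g p $ 2 $ 2 = - a (p$1)"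
      and g12: "g p $ 1 $ 2 = 0" and g21: "g p $ 2 $ 1 = 0"
      by (simp_all add: g_def coord_metric_def a_def)
    have "h (p$1) * deriv a (p$1) + 2 * a (p$1) * deriv h (p$1) = c p * a (p$1)"
      using e(1) unfolding lie_metric_def
      by (simp add: sum_2 X1[OF p] X2[OF p] pdX1[OF p] pdX2[OF p] pdg11[OF p] g11 g12 g21)
    moreover have "- h (p$1) * deriv a (p$1) = - c p * a (p$1)"
      using e(2) unfolding lie_metric_def
      by (simp add: sum_2 X1[OF p] X2[OF p] pdX1[OF p] pdX2[OF p] pdg22[OF p] g22 g12 g21)
    ultimately have "a (p$1) * deriv h (p$1) = 0" by algebra
    then show ?thesis using anz[OF p] by simp
  qed
  have cst: "(\<lambda>q. h (q$1)) constant_on U"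
  proof (rule has_derivative_zero_connected_constant_on[OF assms(2) assms(1) finite.emptyI])
    show "continuous_on U (\<lambda>q. h (q$1))"
      proof (rule continuous_at_imp_continuous_on, rule ballI)
      fix q assume "q \<in> U"
      from has_derivative_continuous[OF hder[OF this]] show "isCont (\<lambda>q. h (q$1)) q" .
    qed
    show "\<forall>x\<in>U - {}. ((\<lambda>q. h (q $ 1)) has_derivative (\<lambda>h. 0)) (at x within U)"
      proof
      fix q assume "q \<in> U - {}"
      then have q: "q \<in> U" by simp
      have "((\<lambda>q. h (q $ 1)) has_derivative (\<lambda>v. 0)) (at q)"
        using hder[OF q] h0[OF q] by simp
      then show "((\<lambda>q. h (q $ 1)) has_derivative (\<lambda>h. 0)) (at q within U)"
        by (rule has_derivative_at_withinI)
    qed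
  qed
  then obtain k where k: "\<And>q. q \<in> U \<Longrightarrow> h (q$1) = k" unfolding constant_on_def by blast
  show ?thesis
  proof (intro exI ballI)
    fix p assume p: "p \<in> U"
    have "w (p$1) = k * a (p$1)" using k[OF p] anz[OF p] unfolding h_def by (simp add: field_simps)
    then show "F1 (p$1) *\<^sub>R dform (\<lambda>q. F2 (q$1)) p = k *\<^sub>R dform (\<lambda>q. \<psi> (q$1)) p"
      using omega[OF p] dformpsi[OF p] unfolding \<omega>_def by (simp add: vec_eq_iff)
  qed
qed

end
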